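(* Let $m\ge2$, consider the simply laced Cartan matrix of type $\tilde A_m$ (graph: the cycle on vertices $1,\dots,m+1$ with edges $\{j,j+1\}$, indices mod $m+1$) with an acyclic orientation, and let $z_1,\dots,z_{m+1}$ be commuting indeterminates. Define the frise with variables by $a(j,0)=z_j$ and $a(j,n)a(j,n+1)=1+\big(\prod_{j\to i}a(i,n)\big)\big(\prod_{i\to j}a(i,n+1)\big)$. Then for each $j$, the sequence $(a(j,n))_{n\in\mathbf N}$ is $K$-rational, where $K=\mathbf N[z_1^{\pm1},\dots,z_{m+1}^{\pm1}]$ is the semiring of Laurent polynomials in the $z_i$ with nonnegative integer coefficients.
   Context: For a commutative semiring $K$, a sequence $(a_n)_{n\in\mathbf N}$ in $K$ is $K$-rational if there exist $r\ge1$, $\lambda\in K^{1\times r}$, $M\in K^{r\times r}$, $\gamma\in K^{r\times1}$ with $a_n=\lambda M^n\gamma$ for all $n$ (equivalently, $\sum a_nX^n$ lies in the smallest subsemiring of $K[[X]]$ containing $K[X]$ and closed under $T\mapsto\sum_{k\ge0}T^k$ for $T$ without constant term). The orientation notation $i\to j$ means the edge $\{i,j\}$ is oriented from $i$ to $j$; the recurrence determines the $a(j,n)$ as rational functions since the orientation is acyclic. *)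

theory Defs
  imports Main "HOL-Library.Poly_Mapping"
begin

text \<open>Laurent polynomials with nonnegative integer coefficients: a monomial is a finitely
supported exponent vector (variable index to integer exponent); a Laurent polynomial maps
monomials to natural-number coefficients (finitely supported).\<close>
type_synonym laurent = "(nat \<Rightarrow>\<^sub>0 int) \<Rightarrow>\<^sub>0 nat"

text \<open>The variable z_j (vertices are numbered 0..m instead of 1..m+1).\<close>
definition zvar :: "nat \<Rightarrow> laurent" where
  "zvar j = Poly_Mapping.single (Poly_Mapping.single j 1) 1"

text \<open>The semiring K = N[z_0^{+-1},...,z_m^{+-1}] as a carrier set: Laurent polynomials
involving only the variables z_0..z_m.\<close>
definition Kset :: "nat \<Rightarrow> laurent set" where
  "Kset m = {p. \<forall>e \<in> Poly_Mapping.keys p. Poly_Mapping.keys e \<subseteq> {..m}}"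

fun matpow :: "nat \<Rightarrow> (nat \<Rightarrow> nat \<Rightarrow> 'a::comm_semiring_1) \<Rightarrow> nat \<Rightarrow> nat \<Rightarrow> nat \<Rightarrow> 'a" where
  "matpow r M 0 = (\<lambda>i j. if i = j then 1 else 0)"
| "matpow r M (Suc n) = (\<lambda>i j. \<Sum>k<r. matpow r M n i k * M k j)"

definition rational_seq :: "'a::comm_semiring_1 set \<Rightarrow> (nat \<Rightarrow> 'a) \<Rightarrow> bool" where
  "rational_seq S a \<longleftrightarrow>
     (\<exists>r::nat. \<exists>lam M gam. r \<ge> 1 \<and>
        (\<forall>i<r. lam i \<in> S) \<and> (\<forall>i<r. \<forall>j<r. M i j \<in> S) \<and> (\<forall>j<r. gam j \<in> S) \<and>
        (\<forall>n. a n = (\<Sum>i<r. \<Sum>j<r. lam i * matpow r M n i j * gam j)))"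

text \<open>Orientation of the cycle of type tilde A_m on vertices 0..m with edges {j, (j+1) mod (m+1)}:
ori j = True means j \<rightarrow> (j+1) mod (m+1), ori j = False means (j+1) mod (m+1) \<rightarrow> j.\<close>
definition arr :: "nat \<Rightarrow> (nat \<Rightarrow> bool) \<Rightarrow> nat \<Rightarrow> nat \<Rightarrow> bool" where
  "arr m ori i j \<longleftrightarrow> i \<le> m \<and> j \<le> m \<and>
     ((j = (i + 1) mod (m + 1) \<and> ori i) \<or> (i = (j + 1) mod (m + 1) \<and> \<not> ori j))"

definition acyclic_orientation :: "nat \<Rightarrow> (nat \<Rightarrow> bool) \<Rightarrow> bool" where
  "acyclic_orientation m ori \<longleftrightarrow> (\<forall>i. \<not> (arr m ori)\<^sup>+\<^sup>+ i i)"

definition is_frise :: "nat \<Rightarrow> (nat \<Rightarrow> bool) \<Rightarrow> (nat \<Rightarrow> nat \<Rightarrow> laurent) \<Rightarrow> bool" where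
  "is_frise m ori a \<longleftrightarrow>
     (\<forall>j\<le>m. a j 0 = zvar j) \<and>
     (\<forall>j\<le>m. \<forall>n. a j n * a j (Suc n) =
        1 + (\<Prod>i\<in>{i. i \<le> m \<and> arr m ori j i}. a i n) * (\<Prod>i\<in>{i. i \<le> m \<and> arr m ori i j}. a i (Suc n)))"

end

theory Submission imports Defs begin
type_synonym ilaurent = "(nat \<Rightarrow>\<^sub>0 int) \<Rightarrow>\<^sub>0 int"
definition phi :: "laurent \<Rightarrow> ilaurent" where "phi p = Poly_Mapping.map int p"

lemma lookup_phi: "Poly_Mapping.lookup (phi p) k = int (Poly_Mapping.lookup p k)"
  unfolding phi_def by transfer (simp add: when_def)

lemma of_nat_Sum_any:
  assumes "finite {a. F a \<noteq> 0}"
  shows "int (Sum_any F) = Sum_any (\<lambda>a. int (F a))"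
proof -
  have "{a. int (F a) \<noteq> 0} = {a. F a \<noteq> 0}" by auto
  then show ?thesis by (simp add: Sum_any.expand_set)
qed

lemma phi_mult: "phi (p * q) = phi p * phi q"
proof (rule poly_mapping_eqI)
  fix k
  have fin1: "finite {qq. (Poly_Mapping.lookup q qq when k = l + qq) \<noteq> 0}" for l
    by (rule finite_subset[of _ "Poly_Mapping.keys q"]) (auto simp: in_keys_iff when_def)
  have fin2: "finite {l. Poly_Mapping.lookup p l * (\<Sum>qq. Poly_Mapping.lookup q qq when k = l + qq) \<noteq> 0}"
    by (rule finite_subset[of _ "Poly_Mapping.keys p"]) (auto simp: in_keys_iff when_def)
  have "Poly_Mapping.lookup (phi (p*q)) k = int (Poly_Mapping.lookup (p*q) k)" by (simp add: lookup_phi)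
  also have "\<dots> = (\<Sum>l. int (Poly_Mapping.lookup p l * (\<Sum>qq. Poly_Mapping.lookup q qq when k = l + qq)))"
    by (simp add: lookup_mult of_nat_Sum_any[OF fin2])
  also have "\<dots> = (\<Sum>l. int (Poly_Mapping.lookup p l) * (\<Sum>qq. int (Poly_Mapping.lookup q qq) when k = l + qq))"
  proof (rule Sum_any.cong)
    fix l
    have "int (\<Sum>qq. Poly_Mapping.lookup q qq when k = l + qq) = (\<Sum>qq. int (Poly_Mapping.lookup q qq when k = l + qq))"
      by (rule of_nat_Sum_any[OF fin1])
    also have "\<dots> = (\<Sum>qq. int (Poly_Mapping.lookup q qq) when k = l + qq)"
      by (rule Sum_any.cong) (simp add: when_def)
    finally show "int (Poly_Mapping.lookup p l * (\<Sum>qq. Poly_Mapping.lookup q qq when k = l + qq)) = int (Poly_Mapping.lookup p l) * (\<Sum>qq. int (Poly_Mapping.lookup q qq) when k = l + qq)"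
      by simp
  qed
  also have "\<dots> = Poly_Mapping.lookup (phi p * phi q) k" by (simp add: lookup_mult lookup_phi)
  finally show "Poly_Mapping.lookup (phi (p*q)) k = Poly_Mapping.lookup (phi p * phi q) k" .
qed

lemma phi_add: "phi (p + q) = phi p + phi q"
  by (rule poly_mapping_eqI) (simp add: lookup_phi lookup_add)
lemma phi_one: "phi 1 = 1"
  by (rule poly_mapping_eqI) (simp add: lookup_phi lookup_one when_def)
lemma phi_zero: "phi 0 = 0"
  by (rule poly_mapping_eqI) (simp add: lookup_phi)
lemma phi_inj: "phi p = phi q \<Longrightarrow> p = q"
  by (rule poly_mapping_eqI) (metis lookup_phi of_nat_eq_iff)
lemma phi_prod: "phi (prod f A) = prod (\<lambda>i. phi (f i)) A"
  by (induction A rule: infinite_finite_induct) (auto simp: phi_one phi_mult)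


type_synonym 'a m2 = "'a \<times> 'a \<times> 'a \<times> 'a"

fun mm :: "'a::comm_semiring_1 m2 \<Rightarrow> 'a m2 \<Rightarrow> 'a m2" where
  "mm (a,b,c,d) (e,f,g,h) = (a*e+b*g, a*f+b*h, c*e+d*g, c*f+d*h)"

definition id2 :: "'a::comm_semiring_1 m2" where "id2 = (1,0,0,1)"

lemma mm_assoc: "mm (mm A B) C = mm A (mm B C)"
  by (cases A; cases B; cases C) (simp add: algebra_simps)

fun pmap :: "laurent m2 \<Rightarrow> ilaurent m2" where
  "pmap (a,b,c,d) = (phi a, phi b, phi c, phi d)"

lemma pmap_mm: "pmap (mm A B) = mm (pmap A) (pmap B)"
  by (cases A; cases B) (simp add: phi_add phi_mult)

fun det2 :: "'a::comm_ring_1 m2 \<Rightarrow> 'a" where "det2 (a,b,c,d) = a*d - b*c"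
lemma det2_mm: "det2 (mm A B) = det2 A * det2 B"
  by (cases A; cases B) (simp add: algebra_simps)

fun col1 :: "'a m2 \<Rightarrow> 'a \<times> 'a" where "col1 (a,b,c,d) = (a,c)"
fun col2 :: "'a m2 \<Rightarrow> 'a \<times> 'a" where "col2 (a,b,c,d) = (b,d)"
fun DD :: "'a::comm_ring_1 \<times> 'a \<Rightarrow> 'a \<times> 'a \<Rightarrow> 'a" where "DD (u1,u2) (v1,v2) = u1*v2 - u2*v1"

lemma pluecker: "DD a c * DD b d = DD b c * DD a d + DD a b * DD c d"
  by (cases a; cases b; cases c; cases d) (simp add: algebra_simps)

definition yvar :: "nat \<Rightarrow> laurent" where
  "yvar j = Poly_Mapping.single (Poly_Mapping.single j (-1)) 1"

lemma zy: "zvar j * yvar j = 1"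
  using single_one[where 'a="nat \<Rightarrow>\<^sub>0 int" and 'b=nat]
  by (simp add: zvar_def yvar_def mult_single flip: single_add)

locale fr =
  fixes m :: nat and ori :: "nat \<Rightarrow> bool"
begin

definition NN :: int where "NN = int m + 1"
lemma NN_pos: "NN > 0" by (simp add: NN_def)

definition oo :: "int \<Rightarrow> bool" where "oo k = ori (nat (k mod NN))"
definition xv :: "int \<Rightarrow> laurent" where "xv k = zvar (nat (k mod NN))"
definition yv :: "int \<Rightarrow> laurent" where "yv k = yvar (nat (k mod NN))"

lemma xy: "xv k * yv k = 1" by (simp add: xv_def yv_def zy)

lemma oo_per: "oo (k + NN) = oo k" by (simp add: oo_def)
lemma xv_per: "xv (k + NN) = xv k" by (simp add: xv_def)
lemma yv_per: "yv (k + NN) = yv k" by (simp add: yv_def)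

definition Mk :: "int \<Rightarrow> laurent m2" where
  "Mk k = (if oo k then (xv (k+1) * yv k, 0, yv k, 1) else (1, yv k, 0, xv (k+1) * yv k))"

lemma Mk_per: "Mk (k + NN) = Mk k"
proof -
  have "xv (k + NN + 1) = xv (k+1)" using xv_per[of "k+1"] by (simp add: ac_simps)
  then show ?thesis by (simp add: Mk_def oo_per yv_per)
qed

primrec Prod :: "int \<Rightarrow> nat \<Rightarrow> laurent m2" where
  "Prod i 0 = id2"
| "Prod i (Suc n) = mm (Prod i n) (Mk (i + int n))"

lemma mm_id2_left: "mm id2 A = A" by (cases A) (simp add: id2_def)
lemma mm_id2_right: "mm A id2 = A" by (cases A) (simp add: id2_def)

lemma Prod_add: "Prod i (a + b) = mm (Prod i a) (Prod (i + int a) b)"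
  by (induction b) (simp_all add: mm_id2_right mm_assoc ac_simps)

lemma Prod_Suc_left: "Prod i (Suc n) = mm (Mk i) (Prod (i+1) n)"
  using Prod_add[of i 1 n] by (simp add: mm_id2_left)

lemma Prod_per: "Prod (i + NN) n = Prod i n"
proof (induction n)
  case (Suc n)
  have "Mk (i + NN + int n) = Mk (i + int n)" using Mk_per[of "i + int n"] by (simp add: ac_simps)
  with Suc show ?case by simp
qed simp

definition lam :: "int \<Rightarrow> int \<Rightarrow> laurent" where
  "lam i l = xv i * fst (Prod i (nat (l - i)))"

definition X where "X k = phi (xv k)"
definition Y where "Y k = phi (yv k)"
lemma XY: "X k * Y k = 1" by (simp add: X_def Y_def xy flip: phi_mult) (simp add: phi_one)

definition pP where "pP s n = pmap (Prod s n)"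

lemma det_Mk: "det2 (pmap (Mk k)) = X (k+1) * Y k"
  by (simp add: Mk_def phi_mult phi_one phi_zero X_def Y_def)

lemma det_Prod: "det2 (pP i n) = X (i + int n) * Y i"
proof (induction n)
  case 0 then show ?case by (simp add: pP_def id2_def phi_one phi_zero XY)
next
  case (Suc n)
  have "pP i (Suc n) = mm (pP i n) (pmap (Mk (i + int n)))" by (simp add: pP_def pmap_mm)
  then have "det2 (pP i (Suc n)) = X (i + int n) * Y i * (X (i + int n + 1) * Y (i + int n))"
    by (simp add: det2_mm det_Mk Suc)
  also have "\<dots> = (X (i + int n) * Y (i + int n)) * X (i + int n + 1) * Y i" by (simp add: ac_simps)
  also have "\<dots> = X (i + int (Suc n)) * Y i" by (simp add: XY ac_simps)
  finally show ?case .
qed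

lemma G: assumes "s \<le> i" "i \<le> l"
  shows "phi (lam i l) = X s * DD (col1 (pP s (nat (l - s)))) (col2 (pP s (nat (i - s))))"
proof -
  have e: "nat (l - s) = nat (i - s) + nat (l - i)" using assms by simp
  have si: "s + int (nat (i - s)) = i" using assms by simp
  obtain a1 a2 a3 a4 where A: "pP s (nat (i - s)) = (a1,a2,a3,a4)" by (cases "pP s (nat (i - s))") auto
  obtain p1 p2 p3 p4 where P: "pmap (Prod i (nat (l - i))) = (p1,p2,p3,p4)" by (cases "pmap (Prod i (nat (l - i)))") auto
  have dA: "a1*a4 - a2*a3 = X i * Y s" using det_Prod[of s "nat (i - s)"] A si by simp
  have "pP s (nat (l - s)) = mm (pP s (nat (i - s))) (pmap (Prod i (nat (l - i))))"
    unfolding pP_def e Prod_add pmap_mm si ..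
  then have "DD (col1 (pP s (nat (l - s)))) (col2 (pP s (nat (i - s)))) = p1 * (a1*a4 - a2*a3)"
    using A P by (simp add: algebra_simps)
  also have "\<dots> = p1 * X i * Y s" using dA by simp
  finally have "X s * DD (col1 (pP s (nat (l - s)))) (col2 (pP s (nat (i - s)))) = p1 * X i * (X s * Y s)"
    by (simp add: ac_simps)
  also have "\<dots> = phi (lam i l)"
    using P by (cases "Prod i (nat (l - i))") (simp add: lam_def XY[of s, unfolded X_def] phi_mult X_def)
  finally show ?thesis by simp
qed

end

context fr begin

lemma c1T: "\<not> oo k \<Longrightarrow> col1 (mm A (pmap (Mk k))) = col1 A"
  by (cases A) (simp add: Mk_def phi_one phi_zero)
lemma c1B: "oo k \<Longrightarrow> DD (col1 A) (col1 (mm A (pmap (Mk k)))) = Y k * det2 A"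
  by (cases A) (simp add: Mk_def phi_one phi_zero phi_mult Y_def algebra_simps)
lemma c2B: "oo k \<Longrightarrow> col2 (mm A (pmap (Mk k))) = col2 A"
  by (cases A) (simp add: Mk_def phi_one phi_zero)

lemma pP_Suc: "pP s (Suc n) = mm (pP s n) (pmap (Mk (s + int n)))"
  by (simp add: pP_def pmap_mm)

lemma c1_iter: "(\<forall>t'<t. \<not> oo (s + int n + int t')) \<Longrightarrow> col1 (pP s (n + t)) = col1 (pP s n)"
proof (induction t)
  case (Suc t)
  then have "\<not> oo (s + int (n + t))" by (simp add: add.assoc)
  with Suc show ?case by (simp add: pP_Suc c1T)
qed simp

lemma c2_iter: "(\<forall>t'<t. oo (s + 1 + int t')) \<Longrightarrow> col2 (pP s (Suc t)) = col2 (pP s 1)"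
proof (induction t)
  case (Suc t)
  then have "oo (s + int (Suc t))" by (simp add: add.assoc)
  with Suc show ?case by (simp add: pP_Suc[of s "Suc t"] c2B)
qed simp

lemma ptolemy:
  fixes s :: int and u v w :: nat
  assumes u1: "u \<ge> 1" and w1: "w \<ge> 1" and Ts: "\<not> oo s"
    and Bmid: "\<forall>t. 0 < t \<and> t < u \<longrightarrow> oo (s + int t)"
    and Tmid: "\<forall>t. t + 1 < w \<longrightarrow> \<not> oo (s + int u + int v + int t)"
    and Bend: "oo (s + int u + int v + int w - 1)"
  shows "lam (s + int u) (s + int u + int v) * lam s (s + int u + int v + int w)
       = 1 + lam (s + int u) (s + int u + int v + int w) * lam s (s + int u + int v)"
proof -
  define a where "a = col1 (pP s (u + v))"
  define b where "b = col1 (pP s (u + v + w))"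
  define c where "c = col2 (pP s u)"
  define d where "d = col2 (pP s 0)"
  have d01: "d = (0,1)" by (simp add: d_def pP_def id2_def phi_zero phi_one)
  obtain w' where w': "w = Suc w'" using w1 by (cases w) auto
  have "col1 (pP s (u + v + w')) = a"
    unfolding a_def by (rule c1_iter) (use Tmid w' in \<open>auto simp: add.assoc\<close>)
  moreover have "b = col1 (mm (pP s (u + v + w')) (pmap (Mk (s + int (u + v + w')))))"
    unfolding b_def w' by (simp add: pP_Suc)
  moreover have "oo (s + int (u + v + w'))" using Bend w' by (simp add: add.assoc)
  ultimately have "DD a b = Y (s + int (u + v + w')) * det2 (pP s (u + v + w'))"
    using c1B by metis
  also have "\<dots> = (X (s + int (u + v + w')) * Y (s + int (u + v + w'))) * Y s"
    by (simp add: det_Prod ac_simps)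
  finally have Dab: "DD a b = Y s" by (simp add: XY)
  obtain u' where u': "u = Suc u'" using u1 by (cases u) auto
  have "c = col2 (pP s 1)"
    unfolding c_def u' by (rule c2_iter) (use Bmid u' in \<open>auto simp: add.assoc\<close>)
  then have Dcd: "DD c d = Y s" using Ts
    by (simp add: d01 pP_def id2_def Mk_def phi_one phi_zero Y_def)
  have L1: "phi (lam (s + int u) (s + int u + int v)) = X s * DD a c"
    using G[of s "s + int u" "s + int u + int v"] by (simp add: a_def c_def nat_add_distrib)
  have L2: "phi (lam s (s + int u + int v + int w)) = X s * DD b d"
    using G[of s s "s + int u + int v + int w"] by (simp add: b_def d_def nat_add_distrib add.assoc)
  have L3: "phi (lam (s + int u) (s + int u + int v + int w)) = X s * DD b c"
    using G[of s "s + int u" "s + int u + int v + int w"] by (simp add: b_def c_def nat_add_distrib add.assoc)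
  have L4: "phi (lam s (s + int u + int v)) = X s * DD a d"
    using G[of s s "s + int u + int v"] by (simp add: a_def d_def nat_add_distrib)
  have "phi (lam (s + int u) (s + int u + int v) * lam s (s + int u + int v + int w))
      = X s * X s * (DD a c * DD b d)" unfolding phi_mult L1 L2 by (simp add: ac_simps)
  also have "\<dots> = X s * X s * (DD b c * DD a d) + (X s * Y s) * (X s * Y s)"
    by (simp add: pluecker[of a c b d] Dab Dcd algebra_simps)
  also have "\<dots> = phi (1 + lam (s + int u) (s + int u + int v + int w) * lam s (s + int u + int v))"
    unfolding phi_add phi_one phi_mult L3 L4 by (simp add: XY ac_simps)
  finally show ?thesis by (rule phi_inj)
qed

lemma V1: assumes "oo i" "i + 1 \<le> l" shows "lam (i+1) l = lam i l"
proof -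
  have e: "nat (l - i) = Suc (nat (l - (i+1)))" using assms by simp
  obtain p1 p2 p3 p4 where P: "Prod (i+1) (nat (l - (i+1))) = (p1,p2,p3,p4)"
    by (cases "Prod (i+1) (nat (l - (i+1)))") auto
  have "lam i l = xv i * (xv (i+1) * yv i * p1)"
    unfolding lam_def e Prod_Suc_left P using assms by (simp add: Mk_def)
  also have "\<dots> = xv (i+1) * p1 * (xv i * yv i)" by (simp add: ac_simps)
  also have "\<dots> = lam (i+1) l" by (simp add: xy lam_def P)
  finally show ?thesis by simp
qed

lemma V2: assumes "\<not> oo l" "i \<le> l" shows "lam i (l+1) = lam i l"
proof -
  have e: "nat (l + 1 - i) = Suc (nat (l - i))" using assms by simp
  have ii: "i + int (nat (l - i)) = l" using assms by simp
  obtain p1 p2 p3 p4 where P: "Prod i (nat (l - i)) = (p1,p2,p3,p4)"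
    by (cases "Prod i (nat (l - i))") auto
  show ?thesis unfolding lam_def e Prod.simps ii P using assms by (simp add: Mk_def)
qed

end


locale frA = fr +
  assumes m2: "m \<ge> 2" and ac: "acyclic_orientation m ori"
begin

lemma exB: "\<exists>k\<le>m. ori k"
proof (rule ccontr)
  assume "\<not> ?thesis"
  then have nb: "\<And>k. k \<le> m \<Longrightarrow> \<not> ori k" by auto
  have ar: "arr m ori ((k+1) mod (m+1)) k" if "k \<le> m" for k
    using that nb[OF that] by (auto simp: arr_def)
  have "\<forall>n. 1 \<le> n \<longrightarrow> n \<le> m \<longrightarrow> (arr m ori)\<^sup>+\<^sup>+ n 0"
  proof (intro allI)
    fix n show "1 \<le> n \<longrightarrow> n \<le> m \<longrightarrow> (arr m ori)\<^sup>+\<^sup>+ n 0"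
    proof (induction n)
      case (Suc n)
      show ?case
      proof (intro impI)
        assume "1 \<le> Suc n" "Suc n \<le> m"
        have a: "arr m ori (Suc n) n" using ar[of n] \<open>Suc n \<le> m\<close> by simp
        show "(arr m ori)\<^sup>+\<^sup>+ (Suc n) 0"
        proof (cases "n = 0")
          case True then show ?thesis using a by auto
        next
          case False
          then have "(arr m ori)\<^sup>+\<^sup>+ n 0" using Suc.IH \<open>Suc n \<le> m\<close> by simp
          then show ?thesis by (rule tranclp_into_tranclp2[of "arr m ori" "Suc n" n 0, OF a])
        qed
      qed
    qed simp
  qed
  then have "(arr m ori)\<^sup>+\<^sup>+ m 0" using m2 by auto
  moreover have "arr m ori 0 m" using ar[of m] by simp
  ultimately have "(arr m ori)\<^sup>+\<^sup>+ 0 0" by auto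
  then show False using ac by (simp add: acyclic_orientation_def)
qed

lemma exT: "\<exists>k\<le>m. \<not> ori k"
proof (rule ccontr)
  assume "\<not> ?thesis"
  then have nb: "\<And>k. k \<le> m \<Longrightarrow> ori k" by auto
  have ar: "arr m ori k ((k+1) mod (m+1))" if "k \<le> m" for k
    using that nb[OF that] by (auto simp: arr_def)
  have "\<forall>n. 1 \<le> n \<longrightarrow> n \<le> m \<longrightarrow> (arr m ori)\<^sup>+\<^sup>+ 0 n"
  proof (intro allI)
    fix n show "1 \<le> n \<longrightarrow> n \<le> m \<longrightarrow> (arr m ori)\<^sup>+\<^sup>+ 0 n"
    proof (induction n)
      case (Suc n)
      show ?case
      proof (intro impI)
        assume "1 \<le> Suc n" "Suc n \<le> m"
        have a: "arr m ori n (Suc n)" using ar[of n] \<open>Suc n \<le> m\<close> by simp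
        show "(arr m ori)\<^sup>+\<^sup>+ 0 (Suc n)"
        proof (cases "n = 0")
          case True then show ?thesis using a by auto
        next
          case False
          then have "(arr m ori)\<^sup>+\<^sup>+ 0 n" using Suc.IH \<open>Suc n \<le> m\<close> by simp
          then show ?thesis using a by (rule tranclp.trancl_into_trancl)
        qed
      qed
    qed simp
  qed
  then have "(arr m ori)\<^sup>+\<^sup>+ 0 m" using m2 by auto
  moreover have "arr m ori m 0" using ar[of m] by simp
  ultimately have "(arr m ori)\<^sup>+\<^sup>+ 0 0" by auto
  then show False using ac by (simp add: acyclic_orientation_def)
qed

lemma oo_nat: "k \<le> m \<Longrightarrow> oo (int k) = ori k"
  by (simp add: oo_def NN_def)

lemma exB_int: "\<exists>d::nat. oo (l + int d)"
proof -
  obtain k where k: "k \<le> m" "ori k" using exB by auto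
  let ?d = "nat ((int k - l) mod NN)"
  have "(l + int ?d) mod NN = int k mod NN" using NN_pos by (simp add: mod_add_right_eq)
  also have "\<dots> = int k" using k by (simp add: NN_def)
  finally have "oo (l + int ?d) = ori k" by (simp add: oo_def)
  with k show ?thesis by blast
qed

lemma exT_int: "\<exists>d::nat. \<not> oo (l - 1 - int d)"
proof -
  obtain k where k: "k \<le> m" "\<not> ori k" using exT by auto
  let ?d = "nat ((l - 1 - int k) mod NN)"
  have "(l - 1 - int ?d) mod NN = int k mod NN" using NN_pos by (simp add: mod_diff_right_eq)
  also have "\<dots> = int k" using k by (simp add: NN_def)
  finally have "oo (l - 1 - int ?d) = ori k" by (simp add: oo_def)
  with k show ?thesis by blast
qed

definition nextB :: "int \<Rightarrow> int" where "nextB l = l + int (LEAST d. oo (l + int d))"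
definition prevT :: "int \<Rightarrow> int" where "prevT i = i - 1 - int (LEAST d. \<not> oo (i - 1 - int d))"

lemma nB1: "l \<le> nextB l" by (simp add: nextB_def)
lemma nB2: "oo (nextB l)" unfolding nextB_def using exB_int by (rule LeastI_ex)
lemma nB3: assumes "l \<le> k" "k < nextB l" shows "\<not> oo k"
proof -
  have "nat (k - l) < (LEAST d. oo (l + int d))" using assms by (simp add: nextB_def)
  then have "\<not> oo (l + int (nat (k - l)))" by (rule not_less_Least)
  with assms show ?thesis by simp
qed
lemma pT1: "prevT i < i" by (simp add: prevT_def)
lemma pT2: "\<not> oo (prevT i)" unfolding prevT_def using exT_int by (rule LeastI_ex)
lemma pT3: assumes "prevT i < k" "k < i" shows "oo k"
proof -
  have "nat (i - 1 - k) < (LEAST d. \<not> oo (i - 1 - int d))" using assms by (simp add: prevT_def)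
  then have "\<not> \<not> oo (i - 1 - int (nat (i - 1 - k)))" by (rule not_less_Least)
  with assms show ?thesis by simp
qed

lemma nB_uniq: assumes "l \<le> k" "oo k" "\<And>k'. l \<le> k' \<Longrightarrow> k' < k \<Longrightarrow> \<not> oo k'" shows "nextB l = k"
proof (rule ccontr)
  assume "nextB l \<noteq> k"
  then consider "nextB l < k" | "k < nextB l" by linarith
  then show False
  proof cases
    case 1 then show False using assms(3)[of "nextB l"] nB1[of l] nB2[of l] by blast
  next
    case 2 then show False using nB3[of l k] assms(1,2) by blast
  qed
qed
lemma pT_uniq: assumes "k < i" "\<not> oo k" "\<And>k'. k < k' \<Longrightarrow> k' < i \<Longrightarrow> oo k'" shows "prevT i = k"
proof (rule ccontr)
  assume "prevT i \<noteq> k"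
  then consider "prevT i < k" | "k < prevT i" by linarith
  then show False
  proof cases
    case 1 then show False using pT3[of i k] assms(1,2) by blast
  next
    case 2 then show False using assms(3)[of "prevT i"] pT1[of i] pT2[of i] by blast
  qed
qed

lemma oo_per': "oo (k - NN) = oo k" using oo_per[of "k - NN"] by simp

lemma nB_per: "nextB (l + NN) = nextB l + NN"
proof (rule nB_uniq)
  show "l + NN \<le> nextB l + NN" using nB1 by simp
  show "oo (nextB l + NN)" using nB2 by (simp add: oo_per)
  fix k' assume "l + NN \<le> k'" "k' < nextB l + NN"
  then show "\<not> oo k'" using nB3[of l "k' - NN"] by (simp add: oo_per')
qed
lemma pT_per: "prevT (i + NN) = prevT i + NN"
proof (rule pT_uniq)
  show "prevT i + NN < i + NN" using pT1 by simp
  show "\<not> oo (prevT i + NN)" using pT2 by (simp add: oo_per)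
  fix k' assume "prevT i + NN < k'" "k' < i + NN"
  then show "oo k'" using pT3[of i "k' - NN"] by (simp add: oo_per')
qed

lemma nB_B: "oo j \<Longrightarrow> nextB j = j" by (rule nB_uniq) auto
lemma nB_T: "\<not> oo j \<Longrightarrow> nextB (j+1) = nextB j"
proof (rule nB_uniq)
  assume "\<not> oo j"
  then have "nextB j \<noteq> j" using nB2 by metis
  then show "j + 1 \<le> nextB j" using nB1[of j] by simp
  show "oo (nextB j)" by (rule nB2)
  fix k' assume "j + 1 \<le> k'" "k' < nextB j" then show "\<not> oo k'" using nB3[of j k'] by simp
qed
lemma pT_B: "oo j \<Longrightarrow> prevT (j+1) = prevT j"
proof (rule pT_uniq)
  show "prevT j < j + 1" using pT1[of j] by simp
  show "\<not> oo (prevT j)" by (rule pT2)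
  fix k' assume "oo j" "prevT j < k'" "k' < j + 1" then show "oo k'"
    using pT3[of j k'] by (cases "k' = j") auto
qed
lemma pT_T: "\<not> oo j \<Longrightarrow> prevT (j+1) = j" by (rule pT_uniq) auto

definition sB where "sB l = nextB l + 1"
definition II where "II j n = (prevT ^^ n) j"
definition LL where "LL j n = (sB ^^ n) j"

lemma II_Suc: "II j (Suc n) = prevT (II j n)" by (simp add: II_def)
lemma LL_Suc: "LL j (Suc n) = sB (LL j n)" by (simp add: LL_def)
lemma II_Suc': "II j (Suc n) = II (prevT j) n" by (simp only: II_def funpow_Suc_right comp_apply)
lemma LL_Suc': "LL j (Suc n) = LL (sB j) n" by (simp only: LL_def funpow_Suc_right comp_apply)
lemma II_0[simp]: "II j 0 = j" by (simp add: II_def)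
lemma LL_0[simp]: "LL j 0 = j" by (simp add: LL_def)

lemma II_le: "II j n \<le> j"
  by (induction n) (auto simp: II_Suc intro: order.strict_implies_order[OF pT1] order_trans)
lemma LL_ge: "j \<le> LL j n"
proof (induction n)
  case (Suc n)
  have "LL j n \<le> nextB (LL j n)" by (rule nB1)
  with Suc show ?case by (simp add: LL_Suc sB_def)
qed simp

lemma II_per: "II (j + NN) n = II j n + NN"
  by (induction n) (simp_all add: II_Suc pT_per)
lemma LL_per: "LL (j + NN) n = LL j n + NN"
  by (induction n) (simp_all add: LL_Suc sB_def nB_per)

definition AA where "AA j n = lam (II j n) (LL j n)"

lemma lam_per: "lam (i + NN) (l + NN) = lam i l"
  by (simp add: lam_def xv_per Prod_per)

lemma AA_per: "AA (j + NN) n = AA j n"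
  by (simp add: AA_def II_per LL_per lam_per)

lemma AA_ptolemy: "AA j n * AA j (Suc n) = 1 + lam (II j n) (LL j (Suc n)) * lam (II j (Suc n)) (LL j n)"
proof -
  define i where "i = II j n"
  define l where "l = LL j n"
  define s where "s = prevT i"
  have il: "i \<le> l" unfolding i_def l_def using II_le[of j n] LL_ge[of j n] by simp
  define u where "u = nat (i - s)"
  define v where "v = nat (l - i)"
  define w where "w = nat (nextB l + 1 - l)"
  have si: "s + int u = i" using pT1[of i] by (simp add: u_def s_def)
  have sl: "s + int u + int v = l" using si il by (simp add: v_def)
  have sl': "s + int u + int v + int w = nextB l + 1" using sl nB1[of l] by (simp add: w_def)
  have P: "lam (s + int u) (s + int u + int v) * lam s (s + int u + int v + int w)
       = 1 + lam (s + int u) (s + int u + int v + int w) * lam s (s + int u + int v)"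
  proof (rule ptolemy)
    show "u \<ge> 1" using pT1[of i] by (simp add: u_def s_def)
    show "w \<ge> 1" using nB1[of l] by (simp add: w_def)
    show "\<not> oo s" by (simp add: s_def pT2)
    show "\<forall>t. 0 < t \<and> t < u \<longrightarrow> oo (s + int t)"
      using pT3[of i] si unfolding s_def by auto
    show "\<forall>t. t + 1 < w \<longrightarrow> \<not> oo (s + int u + int v + int t)"
      using nB3[of l] sl sl' by auto
    show "oo (s + int u + int v + int w - 1)" using sl' nB2[of l] by simp
  qed
  have Q: "lam i l * lam s (nextB l + 1) = 1 + lam i (nextB l + 1) * lam s l"
  proof -
    have e1: "i + int v = l" using il by (simp add: v_def)
    have e2: "l + int w = nextB l + 1" using nB1[of l] by (simp add: w_def)
    show ?thesis using P by (simp only: si e1 e2)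
  qed
  then show ?thesis
    by (simp add: AA_def II_Suc LL_Suc sB_def i_def l_def s_def)
qed

lemma N1: "oo j \<Longrightarrow> AA (j+1) n = lam (II j n) (LL j (Suc n))"
proof -
  assume B: "oo j"
  have L: "LL (j+1) k = LL j (Suc k)" for k by (simp add: LL_Suc' sB_def nB_B[OF B])
  show ?thesis
  proof (cases n)
    case 0 then show ?thesis using V1[OF B, of "j+1"] by (simp add: AA_def L LL_Suc sB_def nB_B[OF B])
  next
    case (Suc n') then show ?thesis by (simp add: AA_def L II_Suc' pT_B[OF B])
  qed
qed

lemma N2: "\<not> oo j \<Longrightarrow> AA (j+1) (Suc n) = lam (II j n) (LL j (Suc n))"
  by (simp add: AA_def II_Suc' pT_T LL_Suc' sB_def nB_T)

lemma N3: "oo (j-1) \<Longrightarrow> AA (j-1) (Suc n) = lam (II j (Suc n)) (LL j n)"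
proof -
  assume B: "oo (j-1)"
  have "II (j-1) (Suc n) = II j (Suc n)" using pT_B[OF B] by (simp add: II_Suc')
  moreover have "LL (j-1) (Suc n) = LL j n" using nB_B[OF B] by (simp add: LL_Suc' sB_def)
  ultimately show ?thesis by (simp add: AA_def)
qed

lemma N4: "\<not> oo (j-1) \<Longrightarrow> AA (j-1) n = lam (II j (Suc n)) (LL j n)"
proof -
  assume T: "\<not> oo (j-1)"
  have I: "II j (Suc n) = II (j-1) n" using pT_T[OF T] by (simp add: II_Suc')
  show ?thesis
  proof (cases n)
    case 0 then show ?thesis using V2[OF T, of "j-1"] pT_T[OF T] by (simp add: AA_def II_Suc)
  next
    case (Suc n')
    have "LL (j-1) (Suc n') = LL j (Suc n')" using nB_T[OF T] by (simp add: LL_Suc' sB_def)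
    then show ?thesis using I Suc by (simp add: AA_def)
  qed
qed

lemma AA_0: "AA j 0 = xv j" by (simp add: AA_def lam_def id2_def)

end


lemma sum_block:
  fixes F :: "nat \<Rightarrow> 'a::comm_monoid_add"
  assumes "p < P" "0 < d"
  shows "(\<Sum>j<P*d. if j div d = p then F j else 0) = (\<Sum>r<d. F (p*d + r))"
proof -
  have "(\<Sum>j<P*d. if j div d = p then F j else 0) = sum F {j \<in> {..<P*d}. j div d = p}"
    by (subst sum.inter_filter) auto
  also have "{j \<in> {..<P*d}. j div d = p} = (\<lambda>r. p*d + r) ` {..<d}"
  proof (intro equalityI subsetI)
    fix j assume "j \<in> {j \<in> {..<P*d}. j div d = p}"
    then have "j = p*d + j mod d" "j mod d < d" using assms by (auto simp: mult.commute)
    then show "j \<in> (\<lambda>r. p*d + r) ` {..<d}" by blast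
  next
    fix j assume "j \<in> (\<lambda>r. p*d + r) ` {..<d}"
    then obtain r where r: "r < d" "j = p*d + r" by auto
    have "p*d + r < P*d"
    proof -
      have "p*d + r < p*d + d" using r by simp
      also have "\<dots> = (p+1)*d" by simp
      also have "\<dots> \<le> P*d" using assms by (intro mult_right_mono) auto
      finally show ?thesis .
    qed
    moreover have "(p*d + r) div d = p" using r assms by simp
    ultimately show "j \<in> {j \<in> {..<P*d}. j div d = p}" using r by simp
  qed
  also have "sum F \<dots> = (\<Sum>r<d. F (p*d + r))"
    by (subst sum.reindex) (auto simp: inj_on_def)
  finally show ?thesis .
qed

lemma auto_rational:
  fixes S :: "'a::comm_semiring_1 set" and a :: "nat \<Rightarrow> 'a" and P d :: nat and ph g :: "nat \<Rightarrow> nat"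
  assumes S0: "0 \<in> S" and Pp: "0 < P" and dp: "0 < d" and phr: "\<forall>n. ph n < P"
    and phs: "\<forall>n. ph (Suc n) = g (ph n)"
    and Ys: "\<forall>n r'. r' < d \<longrightarrow> Y (Suc n) r' = (\<Sum>r<d. Y n r * T (ph n) r r')"
    and Y0: "\<forall>r<d. Y 0 r \<in> S" and TS: "\<forall>p<P. \<forall>r<d. \<forall>r'<d. T p r r' \<in> S"
    and OS: "\<forall>p<P. \<forall>r<d. out p r \<in> S"
    and an: "\<forall>n. a n = (\<Sum>r<d. Y n r * out (ph n) r)"
  shows "rational_seq S a"
proof -
  define R where "R = P*d"
  define lam0 where "lam0 k = (if k div d = ph 0 then Y 0 (k mod d) else 0)" for k
  define MM where "MM k k' = (if k' div d = g (k div d) \<and> k div d < P then T (k div d) (k mod d) (k' mod d) else 0)" for k k'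
  define gam where "gam k = out (k div d) (k mod d)" for k
  have Rp: "R \<ge> 1" using Pp dp by (simp add: R_def)
  have kd: "k div d < P" if "k < R" for k using that dp by (simp add: R_def less_mult_imp_div_less)
  have C: "\<forall>k<R. (\<Sum>i<R. lam0 i * matpow R MM n i k) = (if k div d = ph n then Y n (k mod d) else 0)" for n
  proof (induction n)
    case 0
    show ?case
    proof (intro allI impI)
      fix k assume k: "k < R"
      have "(\<Sum>i<R. lam0 i * matpow R MM 0 i k) = (\<Sum>i<R. if i = k then lam0 i else 0)"
        by (rule sum.cong) auto
      also have "\<dots> = lam0 k" using k by simp
      finally show "(\<Sum>i<R. lam0 i * matpow R MM 0 i k) = (if k div d = ph 0 then Y 0 (k mod d) else 0)"
        by (simp add: lam0_def)
    qed
  next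
    case (Suc n)
    show ?case
    proof (intro allI impI)
      fix k assume k: "k < R"
      have "(\<Sum>i<R. lam0 i * matpow R MM (Suc n) i k) = (\<Sum>i<R. \<Sum>k'<R. lam0 i * matpow R MM n i k' * MM k' k)"
        by (simp add: sum_distrib_left mult.assoc)
      also have "\<dots> = (\<Sum>k'<R. (\<Sum>i<R. lam0 i * matpow R MM n i k') * MM k' k)"
        by (subst sum.swap) (simp add: sum_distrib_right)
      also have "\<dots> = (\<Sum>k'<R. (if k' div d = ph n then Y n (k' mod d) else 0) * MM k' k)"
        by (rule sum.cong) (use Suc in auto)
      also have "\<dots> = (\<Sum>k'<P*d. if k' div d = ph n then Y n (k' mod d) * MM k' k else 0)"
        by (rule sum.cong) (auto simp: R_def)
      also have "\<dots> = (\<Sum>r<d. Y n ((ph n * d + r) mod d) * MM (ph n * d + r) k)"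
        by (rule sum_block) (use phr dp in auto)
      also have "\<dots> = (\<Sum>r<d. Y n r * (if k div d = g (ph n) then T (ph n) r (k mod d) else 0))"
        by (rule sum.cong) (use phr dp in \<open>auto simp: MM_def\<close>)
      also have "\<dots> = (if k div d = ph (Suc n) then Y (Suc n) (k mod d) else 0)"
        using Ys dp phs by auto
      finally show "(\<Sum>i<R. lam0 i * matpow R MM (Suc n) i k) = (if k div d = ph (Suc n) then Y (Suc n) (k mod d) else 0)" .
    qed
  qed
  have A: "a n = (\<Sum>i<R. \<Sum>j<R. lam0 i * matpow R MM n i j * gam j)" for n
  proof -
    have "(\<Sum>i<R. \<Sum>j<R. lam0 i * matpow R MM n i j * gam j) = (\<Sum>j<R. (\<Sum>i<R. lam0 i * matpow R MM n i j) * gam j)"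
      by (subst sum.swap) (simp add: sum_distrib_right)
    also have "\<dots> = (\<Sum>j<P*d. if j div d = ph n then Y n (j mod d) * gam j else 0)"
      by (rule sum.cong) (use C in \<open>auto simp: R_def\<close>)
    also have "\<dots> = (\<Sum>r<d. Y n ((ph n * d + r) mod d) * gam (ph n * d + r))"
      by (rule sum_block) (use phr dp in auto)
    also have "\<dots> = (\<Sum>r<d. Y n r * out (ph n) r)"
      by (rule sum.cong) (use dp in \<open>auto simp: gam_def\<close>)
    finally show ?thesis using an by simp
  qed
  show ?thesis unfolding rational_seq_def
  proof (intro exI conjI)
    show "1 \<le> R" by (rule Rp)
    show "\<forall>i<R. lam0 i \<in> S" using Y0 dp S0 by (auto simp: lam0_def)
    show "\<forall>i<R. \<forall>j<R. MM i j \<in> S" using TS dp S0 kd by (auto simp: MM_def)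
    show "\<forall>j<R. gam j \<in> S" using OS dp kd by (auto simp: gam_def)
    show "\<forall>n. a n = (\<Sum>i<R. \<Sum>j<R. lam0 i * matpow R MM n i j * gam j)" using A by blast
  qed
qed


lemma K0: "0 \<in> Kset m" by (simp add: Kset_def)
lemma K1: "1 \<in> Kset m" by (simp add: Kset_def)
lemma Kadd: "p \<in> Kset m \<Longrightarrow> q \<in> Kset m \<Longrightarrow> p + q \<in> Kset m"
  unfolding Kset_def using keys_add[of p q] by blast
lemma Kmult: assumes "p \<in> Kset m" "q \<in> Kset m" shows "p * q \<in> Kset m"
proof -
  have "\<forall>e\<in>Poly_Mapping.keys (p * q). Poly_Mapping.keys e \<subseteq> {..m}"
  proof
  fix e assume "e \<in> Poly_Mapping.keys (p * q)"
  then obtain a b where ab: "e = a + b" "a \<in> Poly_Mapping.keys p" "b \<in> Poly_Mapping.keys q"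
    using keys_mult[of p q] by blast
  then show "Poly_Mapping.keys e \<subseteq> {..m}"
    using assms keys_add[of a b] unfolding Kset_def by blast
  qed
  then show ?thesis by (simp add: Kset_def)
qed
lemma Kz: "j \<le> m \<Longrightarrow> zvar j \<in> Kset m" by (simp add: Kset_def zvar_def)
lemma Ky: "j \<le> m \<Longrightarrow> yvar j \<in> Kset m" by (simp add: Kset_def yvar_def)

fun inK :: "nat \<Rightarrow> laurent m2 \<Rightarrow> bool" where
  "inK m (a,b,c,d) = (a \<in> Kset m \<and> b \<in> Kset m \<and> c \<in> Kset m \<and> d \<in> Kset m)"

lemma mm_K: "inK m A \<Longrightarrow> inK m B \<Longrightarrow> inK m (mm A B)"
  by (cases A; cases B) (simp add: Kadd Kmult)

fun ent :: "'a m2 \<Rightarrow> nat \<Rightarrow> 'a" where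
  "ent (a,b,c,d) r = (if r = 0 then a else if r = 1 then b else if r = 2 then c else d)"

lemma ent_K: "inK m A \<Longrightarrow> ent A r \<in> Kset m" by (cases A) auto

lemma sum4: "(\<Sum>r<(4::nat). f r) = f 0 + f 1 + f 2 + (f 3 :: 'a::comm_monoid_add)"
proof -
  have "{..<4::nat} = {0,1,2,3}" by auto
  then show ?thesis by (simp add: ac_simps)
qed

lemma mm3_ent: assumes "r' < 4"
  shows "ent (mm A (mm P B)) r' = (\<Sum>r<4. ent P r * (ent A (2*(r' div 2) + r div 2) * ent B (2*(r mod 2) + r' mod 2)))"
proof -
  have "r' = 0 \<or> r' = 1 \<or> r' = 2 \<or> r' = 3" using assms by auto
  then show ?thesis unfolding sum4 by (cases A; cases P; cases B) (auto simp: algebra_simps)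
qed

context frA begin

lemma xv_K: "xv k \<in> Kset m"
proof -
  have "nat (k mod NN) \<le> m" using pos_mod_bound[of "int m + 1" k] by (simp add: NN_def nat_le_iff)
  then show ?thesis by (simp add: xv_def Kz)
qed
lemma yv_K: "yv k \<in> Kset m"
proof -
  have "nat (k mod NN) \<le> m" using pos_mod_bound[of "int m + 1" k] by (simp add: NN_def nat_le_iff)
  then show ?thesis by (simp add: yv_def Ky)
qed
lemma Mk_K: "inK m (Mk k)" by (simp add: Mk_def xv_K yv_K Kmult K0 K1)
lemma Prod_K: "inK m (Prod i n)"
  by (induction n) (simp_all add: id2_def K0 K1 mm_K Mk_K)

lemma per_mod: assumes "\<And>i. f (i + NN) = f i" shows "f i = f (i mod NN)"
proof -
  have "f (x + NN * k) = f x" for x k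
  proof (induction k rule: int_induct[of _ 0])
    case (step1 k) then show ?case using assms[of "x + NN * k"] by (simp add: algebra_simps)
  next
    case (step2 k) then show ?case using assms[of "x + NN * (k - 1)"] by (simp add: algebra_simps)
  qed simp
  from this[of "i mod NN" "i div NN"] show ?thesis by simp
qed

lemma sB_per: "sB (l + NN) = sB l + NN" by (simp add: sB_def nB_per)

definition Lf where "Lf i = Prod (prevT i) (nat (i - prevT i))"
definition Rf where "Rf l = Prod l (nat (sB l - l))"
lemma Lf_per: "Lf (i + NN) = Lf i" by (simp add: Lf_def pT_per Prod_per)
lemma Rf_per: "Rf (l + NN) = Rf l" by (simp add: Rf_def sB_per Prod_per)

lemma step_Prod:
  "Prod (II j (Suc n)) (nat (LL j (Suc n) - II j (Suc n)))
   = mm (Lf (II j n)) (mm (Prod (II j n) (nat (LL j n - II j n))) (Rf (LL j n)))"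
proof -
  define i where "i = II j n"
  define l where "l = LL j n"
  have il: "i \<le> l" unfolding i_def l_def using II_le[of j n] LL_ge[of j n] by simp
  have p: "prevT i < i" by (rule pT1)
  have b: "l < sB l" using nB1[of l] by (simp add: sB_def)
  have e: "nat (sB l - prevT i) = nat (i - prevT i) + (nat (l - i) + nat (sB l - l))"
    using il p b by simp
  have e1: "prevT i + int (nat (i - prevT i)) = i" using p by simp
  have e2: "i + int (nat (l - i)) = l" using il by simp
  show ?thesis
    unfolding II_Suc LL_Suc i_def[symmetric] l_def[symmetric] e Prod_add e1 e2 Lf_def Rf_def ..
qed

definition Nn where "Nn = Suc m"
lemma NN_Nn: "NN = int Nn" by (simp add: NN_def Nn_def)

lemma nat_mod_lt: "nat (k mod NN) < Nn" using NN_pos by (simp add: NN_Nn nat_less_iff)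
lemma int_nat_mod: "int (nat (k mod NN)) = k mod NN" using NN_pos by simp

lemma AA_rational: "rational_seq (Kset m) (AA j)"
proof -
  define ph where "ph n = nat (II j n mod NN) * Nn + nat (LL j n mod NN)" for n
  define g where "g p = nat (prevT (int (p div Nn)) mod NN) * Nn + nat (sB (int (p mod Nn)) mod NN)" for p
  define T where "T p r r' = ent (Lf (int (p div Nn))) (2*(r' div 2) + r div 2) * ent (Rf (int (p mod Nn))) (2*(r mod 2) + r' mod 2)" for p r r'
  define Y where "Y n r = ent (Prod (II j n) (nat (LL j n - II j n))) r" for n r
  define out where "out p (r::nat) = (if r = 0 then xv (int (p div Nn)) else 0)" for p r
  have Nnp: "0 < Nn" by (simp add: Nn_def)
  have dv: "(a * Nn + b) div Nn = a" "(a * Nn + b) mod Nn = b" if "b < Nn" for a b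
    using that by auto
  have phd: "ph n div Nn = nat (II j n mod NN)" "ph n mod Nn = nat (LL j n mod NN)" for n
    unfolding ph_def using dv[OF nat_mod_lt] by auto
  show ?thesis
  proof (rule auto_rational[where P="Nn*Nn" and d=4 and ph=ph and g=g and Y=Y and T=T and out=out])
    show "0 \<in> Kset m" by (rule K0)
    show "0 < Nn*Nn" using Nnp by simp
    show "0 < (4::nat)" by simp
    show "\<forall>n. ph n < Nn*Nn"
    proof
      fix n
      have "ph n < nat (II j n mod NN) * Nn + Nn" unfolding ph_def using nat_mod_lt by simp
      also have "\<dots> = (nat (II j n mod NN) + 1) * Nn" by simp
      also have "\<dots> \<le> Nn * Nn" using nat_mod_lt[of "II j n"] by (intro mult_right_mono) auto
      finally show "ph n < Nn*Nn" .
    qed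
    show "\<forall>n. ph (Suc n) = g (ph n)"
    proof
      fix n
      have a: "prevT (II j n) mod NN = prevT (II j n mod NN) mod NN"
        by (rule per_mod[where f="\<lambda>i. prevT i mod NN"]) (simp add: pT_per)
      have b: "sB (LL j n) mod NN = sB (LL j n mod NN) mod NN"
        by (rule per_mod[where f="\<lambda>i. sB i mod NN"]) (simp add: sB_per)
      show "ph (Suc n) = g (ph n)"
        unfolding g_def phd int_nat_mod by (simp add: ph_def II_Suc LL_Suc a b)
    qed
    show "\<forall>n r'. r' < 4 \<longrightarrow> Y (Suc n) r' = (\<Sum>r<4. Y n r * T (ph n) r r')"
    proof (intro allI impI)
      fix n r' :: nat assume r': "r' < 4"
      have a: "Lf (II j n) = Lf (II j n mod NN)" by (rule per_mod) (rule Lf_per)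
      have b: "Rf (LL j n) = Rf (LL j n mod NN)" by (rule per_mod) (rule Rf_per)
      show "Y (Suc n) r' = (\<Sum>r<4. Y n r * T (ph n) r r')"
        unfolding Y_def step_Prod mm3_ent[OF r'] T_def phd int_nat_mod a[symmetric] b[symmetric] ..
    qed
    show "\<forall>r<4. Y 0 r \<in> Kset m" unfolding Y_def using ent_K Prod_K by blast
    show "\<forall>p<Nn*Nn. \<forall>r<4. \<forall>r'<4. T p r r' \<in> Kset m"
      unfolding T_def Lf_def Rf_def using ent_K Prod_K Kmult by blast
    show "\<forall>p<Nn*Nn. \<forall>r<4. out p r \<in> Kset m" unfolding out_def using xv_K K0 by simp
    show "\<forall>n. AA j n = (\<Sum>r<4. Y n r * out (ph n) r)"
    proof
      fix n
      have x: "xv (II j n mod NN) = xv (II j n)" by (simp add: xv_def)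
      obtain p1 p2 p3 p4 where P: "Prod (II j n) (nat (LL j n - II j n)) = (p1,p2,p3,p4)"
        by (cases "Prod (II j n) (nat (LL j n - II j n))") auto
      show "AA j n = (\<Sum>r<4. Y n r * out (ph n) r)"
        unfolding sum4 Y_def out_def phd int_nat_mod x by (simp add: AA_def lam_def P mult.commute)
    qed
  qed
qed

end


context frA begin

lemma jp_eq: "j \<le> m \<Longrightarrow> (j+1) mod (m+1) = (if j = m then 0 else j+1)" by auto
lemma jm_eq: "j \<le> m \<Longrightarrow> (j+m) mod (m+1) = (if j = 0 then m else j-1)"
proof -
  assume j: "j \<le> m"
  show ?thesis
  proof (cases "j = 0")
    case False
    then have "j + m = (j - 1) + (m+1)" by simp
    then have "(j+m) mod (m+1) = (j-1) mod (m+1)" by (metis mod_add_self2)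
    with False j show ?thesis by simp
  qed simp
qed

lemma AA_jp: assumes j: "j \<le> m" shows "AA (int ((j+1) mod (m+1))) n = AA (int j + 1) n"
  unfolding jp_eq[OF j] using AA_per[of 0 n] by (auto simp: NN_def add.commute)
lemma AA_jm: assumes j: "j \<le> m" shows "AA (int ((j+m) mod (m+1))) n = AA (int j - 1) n"
  unfolding jm_eq[OF j] using AA_per[of "-1" n] by (auto simp: NN_def)
lemma oo_j: "j \<le> m \<Longrightarrow> oo (int j) = ori j" by (rule oo_nat)
lemma oo_jm: "j \<le> m \<Longrightarrow> oo (int j - 1) = ori ((j+m) mod (m+1))"
proof -
  assume j: "j \<le> m"
  show ?thesis
  proof (cases "j = 0")
    case True
    have "oo (-1) = oo (-1 + NN)" using oo_per[of "-1"] by simp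
    also have "\<dots> = ori m" using oo_nat[of m] by (simp add: NN_def)
    finally show ?thesis using True j by (simp add: jm_eq)
  next
    case False
    then have "int j - 1 = int (j - 1)" by simp
    then show ?thesis unfolding jm_eq[OF j] using False j oo_nat[of "j-1"] by simp
  qed
qed

lemma frise: "is_frise m ori (\<lambda>j n. AA (int j) n)"
  unfolding is_frise_def
proof (intro conjI allI impI)
  fix j assume j: "j \<le> m"
  show "AA (int j) 0 = zvar j" using j by (simp add: AA_0 xv_def NN_def)
next
  fix j n assume j: "j \<le> m"
  define jp where "jp = (j+1) mod (m+1)"
  define jm where "jm = (j+m) mod (m+1)"
  have jpm: "jp \<le> m" "jm \<le> m" "jp \<noteq> jm" using j m2 unfolding jp_def jm_def jp_eq[OF j] jm_eq[OF j] by auto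
  have arr1: "arr m ori j i \<longleftrightarrow> (i = jp \<and> ori j) \<or> (i = jm \<and> \<not> ori jm)" if "i \<le> m" for i
    using j that unfolding arr_def jp_def jm_def jp_eq[OF j] jm_eq[OF j] jp_eq[OF that]
    by (auto split: if_splits)
  have arr2: "arr m ori i j \<longleftrightarrow> (i = jm \<and> ori jm) \<or> (i = jp \<and> \<not> ori j)" if "i \<le> m" for i
    using j that unfolding arr_def jp_def jm_def jp_eq[OF j] jm_eq[OF j] jp_eq[OF that]
    by (auto split: if_splits)
  have S1: "{i. i \<le> m \<and> arr m ori j i} = {i. i \<le> m \<and> ((i = jp \<and> ori j) \<or> (i = jm \<and> \<not> ori jm))}"
    using arr1 by blast
  have S2: "{i. i \<le> m \<and> arr m ori i j} = {i. i \<le> m \<and> ((i = jm \<and> ori jm) \<or> (i = jp \<and> \<not> ori j))}"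
    using arr2 by blast
  have ap: "AA (int jp) k = AA (int j + 1) k" for k unfolding jp_def by (rule AA_jp[OF j])
  have am: "AA (int jm) k = AA (int j - 1) k" for k unfolding jm_def by (rule AA_jm[OF j])
  have oj: "oo (int j) = ori j" by (rule oo_j[OF j])
  have ojm: "oo (int j - 1) = ori jm" unfolding jm_def by (rule oo_jm[OF j])
  have pt: "AA (int j) n * AA (int j) (Suc n) = 1 + lam (II (int j) n) (LL (int j) (Suc n)) * lam (II (int j) (Suc n)) (LL (int j) n)"
    by (rule AA_ptolemy)
  have jm1: "int j - 1 + 1 = int j" by simp
  show "AA (int j) n * AA (int j) (Suc n) =
        1 + (\<Prod>i\<in>{i. i \<le> m \<and> arr m ori j i}. AA (int i) n) * (\<Prod>i\<in>{i. i \<le> m \<and> arr m ori i j}. AA (int i) (Suc n))"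
  proof (cases "ori j"; cases "ori jm")
    assume a: "ori j" "ori jm"
    have E: "{i. i \<le> m \<and> arr m ori j i} = {jp}" "{i. i \<le> m \<and> arr m ori i j} = {jm}"
      using S1 S2 a jpm by auto
    show ?thesis unfolding E using pt N1[of "int j" n] N3[of "int j" n] a oj ojm by (simp add: ap am)
  next
    assume a: "ori j" "\<not> ori jm"
    have E: "{i. i \<le> m \<and> arr m ori j i} = {jp, jm}" "{i. i \<le> m \<and> arr m ori i j} = {}"
      using S1 S2 a jpm by auto
    show ?thesis unfolding E using pt N1[of "int j" n] N4[of "int j" n] a oj ojm jpm by (simp add: ap am)
  next
    assume a: "\<not> ori j" "ori jm"
    have E: "{i. i \<le> m \<and> arr m ori j i} = {}" "{i. i \<le> m \<and> arr m ori i j} = {jm, jp}"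
      using S1 S2 a jpm by auto
    show ?thesis unfolding E using pt N2[of "int j" n] N3[of "int j" n] a oj ojm jpm by (simp add: ap am mult.commute)
  next
    assume a: "\<not> ori j" "\<not> ori jm"
    have E: "{i. i \<le> m \<and> arr m ori j i} = {jm}" "{i. i \<le> m \<and> arr m ori i j} = {jp}"
      using S1 S2 a jpm by auto
    show ?thesis unfolding E using pt N2[of "int j" n] N4[of "int j" n] a oj ojm by (simp add: ap am mult.commute)
  qed
qed

end

theorem corollary2:
  fixes m :: nat and ori :: "nat \<Rightarrow> bool"
  assumes "m \<ge> 2"
    and "acyclic_orientation m ori"
  shows "\<exists>a. is_frise m ori a \<and> (\<forall>j\<le>m. rational_seq (Kset m) (a j))"
proof -
  interpret frA m ori using assms by unfold_locales
  show ?thesis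
    by (rule exI[of _ "\<lambda>j n. AA (int j) n"]) (simp add: frise AA_rational)
qed


end
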